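(* Let $\phi(x_1,\dots,x_n)=\bigwedge_{i=1}^m (c_{i1}\lor\cdots\lor c_{ik_i})$ be a CNF formula, where each $c_{ij}$ is a literal $x_l$ or $\lnot x_l$. Introduce fresh variables $y_1,\dots,y_m$ and define the 2-CNF formula $$\psi(x_1,\dots,x_n,y_1,\dots,y_m)=\bigwedge_{i=1}^m\bigwedge_{j=1}^{k_i}(\lnot c_{ij}\lor\lnot y_i).$$ Then $$\#(\phi)=\#\mathrm{SAT}_\pm\big(\psi,\{y_1,\dots,y_m\}\big),$$ where $\#(\phi)$ is the number of satisfying assignments of $\phi$.
   Context: For a CNF formula $f$ on variables $z_1,\dots,z_N$ and a set $S$ of its variables, $\#\mathrm{SAT}_\pm(f,S)$ is the sum of $f(\vec z)$ over assignments $\vec z$ in which the XOR of the variables in $S$ is $0$, minus the sum of $f(\vec z)$ over assignments in which that XOR is $1$. *)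

theory Defs
  imports Main
begin

text \<open>A literal is a pair (variable, polarity): (v, True) is the positive literal v,
  (v, False) is the negative literal "not v". A clause is a list of literals,
  a CNF formula a list of clauses.\<close>

type_synonym 'v lit = "'v \<times> bool"
type_synonym 'v clause = "'v lit list"
type_synonym 'v cnf = "'v clause list"

definition lit_val :: "('v \<Rightarrow> bool) \<Rightarrow> 'v lit \<Rightarrow> bool" where
  "lit_val a l = (a (fst l) = snd l)"

definition neg_lit :: "'v lit \<Rightarrow> 'v lit" where
  "neg_lit l = (fst l, \<not> snd l)"

definition cnf_val :: "('v \<Rightarrow> bool) \<Rightarrow> 'v cnf \<Rightarrow> bool" where
  "cnf_val a f = (\<forall>c\<in>set f. \<exists>l\<in>set c. lit_val a l)"

definition assignments :: "'v set \<Rightarrow> ('v \<Rightarrow> bool) set" where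
  "assignments V = {a. \<forall>v. v \<notin> V \<longrightarrow> a v = False}"

definition count_sat :: "'v set \<Rightarrow> 'v cnf \<Rightarrow> nat" where
  "count_sat V f = card {a \<in> assignments V. cnf_val a f}"

definition xor_set :: "('v \<Rightarrow> bool) \<Rightarrow> 'v set \<Rightarrow> bool" where
  "xor_set a S = odd (card {v\<in>S. a v})"

definition sharp_sat_pm :: "'v set \<Rightarrow> 'v cnf \<Rightarrow> 'v set \<Rightarrow> int" where
  "sharp_sat_pm V f S =
     int (card {a \<in> assignments V. cnf_val a f \<and> \<not> xor_set a S})
   - int (card {a \<in> assignments V. cnf_val a f \<and> xor_set a S})"

text \<open>The 2-CNF psi: variables Inl l for x_l, Inr i for y_i; for each clause i and
  each literal c_ij of it, the clause (not c_ij or not y_i).\<close>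
definition psi :: "nat cnf \<Rightarrow> (nat + nat) cnf" where
  "psi phi = concat (map (\<lambda>i. map (\<lambda>l. [neg_lit (apfst Inl l), (Inr i, False)]) (phi ! i))
                       [0..<length phi])"

end

theory Submission
  imports Defs
begin

lemma pow_alt_sum:
  assumes "finite U"
  shows "(\<Sum>T\<in>Pow U. (-1::int) ^ card T) = (if U = {} then 1 else 0)"
proof -
  have "(\<Prod>x\<in>U. (1::int) - 1) = (\<Sum>X\<in>Pow U. (-1) ^ card X * (\<Prod>x\<in>X. 1) * (\<Prod>x\<in>U-X. 1))"
    by (rule prod_diff_conv_sum[OF assms])
  then show ?thesis using assms by (simp add: power_0_left card_eq_0_iff)
qed

lemma assignments_img: "assignments V = (\<lambda>S v. v \<in> S) ` Pow V"
proof
  show "assignments V \<subseteq> (\<lambda>S v. v \<in> S) ` Pow V"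
  proof
    fix a assume "a \<in> assignments V"
    then have "a = (\<lambda>v. v \<in> {v\<in>V. a v})" "{v\<in>V. a v} \<in> Pow V"
      by (auto simp: assignments_def)
    then show "a \<in> (\<lambda>S v. v \<in> S) ` Pow V" by blast
  qed
qed (auto simp: assignments_def)

lemma finite_assignments: "finite V \<Longrightarrow> finite (assignments V)"
  by (simp add: assignments_img)

lemma inj_set_fun: "inj_on (\<lambda>S v. v \<in> S) A"
  by (rule inj_onI) (metis Collect_mem_eq)

lemma sharp_sum:
  assumes "finite V"
  shows "sharp_sat_pm V f S = (\<Sum>a\<in>assignments V.
           if cnf_val a f then (if xor_set a S then -1 else 1) else (0::int))"
proof -
  have fin: "finite (assignments V)" using finite_assignments[OF assms] .
  have "(\<Sum>a\<in>assignments V. if cnf_val a f then (if xor_set a S then -1 else 1) else (0::int))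
     = (\<Sum>a\<in>assignments V. (if cnf_val a f \<and> \<not> xor_set a S then 1 else 0) - (if cnf_val a f \<and> xor_set a S then 1 else (0::int)))"
    by (rule sum.cong) auto
  also have "\<dots> = (\<Sum>a\<in>assignments V. (if cnf_val a f \<and> \<not> xor_set a S then 1 else 0)) - (\<Sum>a\<in>assignments V. (if cnf_val a f \<and> xor_set a S then 1 else (0::int)))"
    by (rule sum_subtractf)
  also have "\<dots> = sharp_sat_pm V f S"
    unfolding sharp_sat_pm_def using fin by (simp add: sum.If_cases Int_def)
  finally show ?thesis by simp
qed


theorem mainTheorem3:
  fixes n :: nat and phi :: "nat cnf"
  assumes "\<forall>c\<in>set phi. \<forall>l\<in>set c. fst l < n"
  shows "int (count_sat {..<n} phi)
         = sharp_sat_pm (Inl ` {..<n} \<union> Inr ` {..<length phi}) (psi phi) (Inr ` {..<length phi})"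
proof -
  define m where "m = length phi"
  define X where "X = assignments {..<n::nat}"
  define Y where "Y = assignments {..<m}"
  define V where "V = Inl ` {..<n} \<union> Inr ` {..<m}"
  define g where "g = (\<lambda>a. if cnf_val a (psi phi) then (if xor_set a (Inr ` {..<m}) then -1 else 1) else (0::int))"
  define U where "U = (\<lambda>x. {i. i < m \<and> \<not> (\<exists>l\<in>set (phi ! i). lit_val x l)})"
  have finV: "finite V" unfolding V_def by simp
  have finX: "finite X" unfolding X_def by (simp add: finite_assignments)
  have finY: "finite Y" unfolding Y_def by (simp add: finite_assignments)
  have V_eq: "assignments V = (\<lambda>(x,y). case_sum x y) ` (X \<times> Y)"
  proof
    show "assignments V \<subseteq> (\<lambda>(x,y). case_sum x y) ` (X \<times> Y)"
    proof
      fix a assume a: "a \<in> assignments V"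
      have "a = case_sum (a \<circ> Inl) (a \<circ> Inr)" by (rule ext) (simp split: sum.split)
      moreover have "(a \<circ> Inl, a \<circ> Inr) \<in> X \<times> Y"
        using a by (auto simp: assignments_def X_def Y_def V_def)
      ultimately show "a \<in> (\<lambda>(x,y). case_sum x y) ` (X \<times> Y)" by force
    qed
  next
    show "(\<lambda>(x,y). case_sum x y) ` (X \<times> Y) \<subseteq> assignments V"
    proof (clarsimp simp: assignments_def X_def Y_def V_def)
      fix a b v assume "\<forall>v. \<not> v < n \<longrightarrow> \<not> a v" "\<forall>v. \<not> v < m \<longrightarrow> \<not> b v"
        "v \<notin> Inl ` {..<n}" "v \<notin> Inr ` {..<m}" "case v of Inl x \<Rightarrow> a x | Inr x \<Rightarrow> b x"
      then show False by (cases v) auto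
    qed
  qed
  have inj: "inj_on (\<lambda>(x,y). case_sum x y) (X \<times> Y)"
  proof (rule inj_onI, clarsimp)
    fix x y x' y' assume h: "case_sum x y = case_sum x' y'"
    have "x = case_sum x y \<circ> Inl" "y = case_sum x y \<circ> Inr"
         "x' = case_sum x' y' \<circ> Inl" "y' = case_sum x' y' \<circ> Inr" by auto
    then show "x = x' \<and> y = y'" using h by metis
  qed
  have cnf_psi: "cnf_val (case_sum x y) (psi phi) = (\<forall>i<m. y i \<longrightarrow> i \<in> U x)" for x y
    by (auto simp: cnf_val_def psi_def lit_val_def neg_lit_def U_def m_def)
  have xor: "xor_set (case_sum x y) (Inr ` {..<m}) = odd (card {i\<in>{..<m}. y i})" for x y
  proof -
    have "{v\<in>Inr ` {..<m}. case_sum x y v} = Inr ` {i\<in>{..<m}. y i}" by auto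
    then show ?thesis unfolding xor_set_def by (simp add: card_image)
  qed
  have Y_img: "Y = (\<lambda>S v. v \<in> S) ` Pow {..<m}" unfolding Y_def by (rule assignments_img)
  have inner: "(\<Sum>y\<in>Y. g (case_sum x y)) = (if cnf_val x phi then 1 else 0)" for x
  proof -
    have UU: "U x \<subseteq> {..<m}" unfolding U_def by auto
    have "(\<Sum>y\<in>Y. g (case_sum x y)) = (\<Sum>T\<in>Pow {..<m}. g (case_sum x (\<lambda>v. v \<in> T)))"
      unfolding Y_img by (simp add: sum.reindex inj_set_fun)
    also have "\<dots> = (\<Sum>T\<in>Pow {..<m}. if T \<subseteq> U x then (-1) ^ card T else 0)"
    proof (rule sum.cong)
      fix T assume T: "T \<in> Pow {..<m}"
      then have "{i\<in>{..<m}. i \<in> T} = T" by auto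
      moreover have "(\<forall>i<m. i \<in> T \<longrightarrow> i \<in> U x) = (T \<subseteq> U x)" using T by auto
      ultimately show "g (case_sum x (\<lambda>v. v \<in> T)) = (if T \<subseteq> U x then (-1) ^ card T else 0)"
        unfolding g_def cnf_psi xor by simp
    qed simp
    also have "\<dots> = (\<Sum>T\<in>{T\<in>Pow {..<m}. T \<subseteq> U x}. (-1) ^ card T)"
      by (rule sum.inter_filter[symmetric]) simp
    also have "{T\<in>Pow {..<m}. T \<subseteq> U x} = Pow (U x)" using UU by auto
    also have "(\<Sum>T\<in>Pow (U x). (-1::int) ^ card T) = (if U x = {} then 1 else 0)"
      by (rule pow_alt_sum) (use UU finite_subset in blast)
    also have "(U x = {}) = cnf_val x phi"
      by (auto simp: U_def cnf_val_def m_def in_set_conv_nth) (meson nth_mem)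
    finally show ?thesis .
  qed
  have "sharp_sat_pm V (psi phi) (Inr ` {..<m}) = (\<Sum>a\<in>assignments V. g a)"
    unfolding g_def by (rule sharp_sum[OF finV])
  also have "\<dots> = (\<Sum>(x,y)\<in>X \<times> Y. g (case_sum x y))"
    unfolding V_eq by (subst sum.reindex[OF inj]) (simp add: case_prod_unfold)
  also have "\<dots> = (\<Sum>x\<in>X. \<Sum>y\<in>Y. g (case_sum x y))"
    by (rule sum.cartesian_product[symmetric])
  also have "\<dots> = (\<Sum>x\<in>X. if cnf_val x phi then 1 else 0)"
    using inner by simp
  also have "\<dots> = int (count_sat {..<n} phi)"
    unfolding count_sat_def X_def using finite_assignments[of "{..<n}"]
    by (simp add: sum.If_cases Int_def)
  finally show ?thesis unfolding V_def m_def by simp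
qed

end
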